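(* Let $S$ be a hyperstonean space, let $N$ be the family of meager subsets of $S$ and $M$ the family of symmetric differences of open sets and meager sets. Then $(S,M,N)$ is a compact strictly localizable enhanced measurable space. Moreover, every continuous open map $f:S\to S'$ between hyperstonean spaces satisfies $f^*M'\subset M$ and $f^*N'\subset N$, so this construction defines a functor $\mathrm{TM}:\mathsf{HStonean}\to\mathsf{CSLEMS}$.
   Context: A hyperstonean space is a compact Hausdorff totally disconnected space in which the closure of every open set is open and such that for every nonempty open $U$ there is a map $\nu$ from open sets to $[0,\infty)$ with $\nu(\emptyset)=0$, $\nu(U_1)+\nu(U_2)=\nu(U_1\cup U_2)+\nu(U_1\cap U_2)$, monotone, preserving suprema of directed families, with $\nu(\overline V)=\nu(V)$ for all open $V$, and $\nu(U)\neq0$. $\mathsf{HStonean}$: hyperstonean spaces and continuous open maps. Enhanced measurable space $(X,M,N)$: $M$ a $\sigma$-algebra, $N\subset M$ closed under subsets and countable unions; morphisms in $\mathsf{EMS}$: classes of premaps $f:X_0\to Y$ ($X\setminus X_0\in N_X$, $f^*M_Y\subset M_X$, $f^*N_Y\subset N_X$) modulo $f^*m\oplus g^*m\in N_X$ for all $m\in M_Y$. Finite measure: countably additive $\mu:M\to\mathbb{C}$ vanishing on $N$; faithful if vanishing on all measurable subsets of $m$ forces $m\in N$; $\sigma$-finite: admits a faithful finite measure. Strictly localizable: partition $\{X_i\}\subset M$ with $\sigma$-finite induced subspaces such that $A\in M$ (resp. $N$) iff $A\cap X_i\in M$ (resp. $N$) for all $i$. Compact: there is a compact class $K\subset M$ (subfamilies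 with finite intersection property have nonempty intersection) with every $m\in M\setminus N$ containing some $k\in K\setminus N$. $\mathsf{CSLEMS}$: full subcategory of $\mathsf{EMS}$ on compact strictly localizable spaces. *)

theory Defs
  imports "HOL-Analysis.Analysis"
begin

definition totally_disconnected_space :: "'a topology \<Rightarrow> bool" where
  "totally_disconnected_space X \<longleftrightarrow>
     (\<forall>C. connectedin X C \<longrightarrow> (\<exists>x. C \<subseteq> {x}))"

definition nowhere_dense_in :: "'a topology \<Rightarrow> 'a set \<Rightarrow> bool" where
  "nowhere_dense_in X A \<longleftrightarrow> A \<subseteq> topspace X \<and> X interior_of (X closure_of A) = {}"

definition meager_in :: "'a topology \<Rightarrow> 'a set \<Rightarrow> bool" where
  "meager_in X A \<longleftrightarrow> A \<subseteq> topspace X \<and>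
     (\<exists>F::nat \<Rightarrow> 'a set. (\<forall>n. nowhere_dense_in X (F n)) \<and> A \<subseteq> (\<Union>n. F n))"

definition normal_open_measure :: "'a topology \<Rightarrow> ('a set \<Rightarrow> real) \<Rightarrow> bool" where
  "normal_open_measure X \<nu> \<longleftrightarrow>
     (\<forall>V. openin X V \<longrightarrow> \<nu> V \<ge> 0) \<and>
     \<nu> {} = 0 \<and>
     (\<forall>U1 U2. openin X U1 \<longrightarrow> openin X U2 \<longrightarrow>
        \<nu> U1 + \<nu> U2 = \<nu> (U1 \<union> U2) + \<nu> (U1 \<inter> U2)) \<and>
     (\<forall>U1 U2. openin X U1 \<longrightarrow> openin X U2 \<longrightarrow> U1 \<subseteq> U2 \<longrightarrow> \<nu> U1 \<le> \<nu> U2) \<and>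
     (\<forall>D. D \<noteq> {} \<longrightarrow> (\<forall>V\<in>D. openin X V) \<longrightarrow>
        (\<forall>A\<in>D. \<forall>B\<in>D. \<exists>C\<in>D. A \<union> B \<subseteq> C) \<longrightarrow>
        \<nu> (\<Union>D) = (SUP V\<in>D. \<nu> V)) \<and>
     (\<forall>V. openin X V \<longrightarrow> \<nu> (X closure_of V) = \<nu> V)"

definition hyperstonean :: "'a topology \<Rightarrow> bool" where
  "hyperstonean X \<longleftrightarrow>
     compact_space X \<and> Hausdorff_space X \<and> totally_disconnected_space X \<and>
     (\<forall>U. openin X U \<longrightarrow> openin X (X closure_of U)) \<and>
     (\<forall>U. openin X U \<longrightarrow> U \<noteq> {} \<longrightarrow>
        (\<exists>\<nu>. normal_open_measure X \<nu> \<and> \<nu> U \<noteq> 0))"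

definition enhanced_measurable_space :: "'a set \<Rightarrow> 'a set set \<Rightarrow> 'a set set \<Rightarrow> bool" where
  "enhanced_measurable_space X M N \<longleftrightarrow>
     sigma_algebra X M \<and> N \<subseteq> M \<and>
     (\<forall>A B. B \<in> N \<longrightarrow> A \<subseteq> B \<longrightarrow> A \<in> N) \<and>
     (\<forall>F::nat \<Rightarrow> 'a set. range F \<subseteq> N \<longrightarrow> (\<Union>n. F n) \<in> N)"

definition ems_finite_measure :: "'a set set \<Rightarrow> 'a set set \<Rightarrow> ('a set \<Rightarrow> complex) \<Rightarrow> bool" where
  "ems_finite_measure M N \<mu> \<longleftrightarrow>
     (\<forall>F::nat \<Rightarrow> 'a set. range F \<subseteq> M \<longrightarrow> disjoint_family F \<longrightarrow>
        (\<lambda>n. \<mu> (F n)) sums \<mu> (\<Union>n. F n)) \<and>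
     (\<forall>A\<in>N. \<mu> A = 0)"

definition ems_faithful :: "'a set set \<Rightarrow> 'a set set \<Rightarrow> ('a set \<Rightarrow> complex) \<Rightarrow> bool" where
  "ems_faithful M N \<mu> \<longleftrightarrow>
     (\<forall>m\<in>M. (\<forall>A\<in>M. A \<subseteq> m \<longrightarrow> \<mu> A = 0) \<longrightarrow> m \<in> N)"

definition ems_sigma_finite :: "'a set set \<Rightarrow> 'a set set \<Rightarrow> bool" where
  "ems_sigma_finite M N \<longleftrightarrow> (\<exists>\<mu>. ems_finite_measure M N \<mu> \<and> ems_faithful M N \<mu>)"

text \<open>Strict localizability; the induced subspace on \<open>Y \<in> M\<close> is
  \<open>(Y, {A\<in>M. A \<subseteq> Y}, {A\<in>N. A \<subseteq> Y})\<close>.\<close>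
definition strictly_localizable :: "'a set \<Rightarrow> 'a set set \<Rightarrow> 'a set set \<Rightarrow> bool" where
  "strictly_localizable X M N \<longleftrightarrow>
     (\<exists>P. P \<subseteq> M \<and> \<Union>P = X \<and> (\<forall>Y\<in>P. \<forall>Z\<in>P. Y \<noteq> Z \<longrightarrow> Y \<inter> Z = {}) \<and>
        (\<forall>Y\<in>P. ems_sigma_finite {A\<in>M. A \<subseteq> Y} {A\<in>N. A \<subseteq> Y}) \<and>
        (\<forall>A. A \<subseteq> X \<longrightarrow> (A \<in> M \<longleftrightarrow> (\<forall>Y\<in>P. A \<inter> Y \<in> M))) \<and>
        (\<forall>A. A \<subseteq> X \<longrightarrow> (A \<in> N \<longleftrightarrow> (\<forall>Y\<in>P. A \<inter> Y \<in> N))))"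

definition compact_class :: "'a set set \<Rightarrow> bool" where
  "compact_class K \<longleftrightarrow>
     (\<forall>F. F \<subseteq> K \<longrightarrow> (\<forall>G. G \<subseteq> F \<longrightarrow> finite G \<longrightarrow> G \<noteq> {} \<longrightarrow> \<Inter>G \<noteq> {})
        \<longrightarrow> \<Inter>F \<noteq> {})"

definition compact_ems :: "'a set set \<Rightarrow> 'a set set \<Rightarrow> bool" where
  "compact_ems M N \<longleftrightarrow>
     (\<exists>K. K \<subseteq> M \<and> compact_class K \<and> (\<forall>m\<in>M - N. \<exists>k\<in>K - N. k \<subseteq> m))"

definition cslems :: "'a set \<Rightarrow> 'a set set \<Rightarrow> 'a set set \<Rightarrow> bool" where
  "cslems X M N \<longleftrightarrow> enhanced_measurable_space X M N \<and> compact_ems M N \<and>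
     strictly_localizable X M N"

definition TM_null :: "'a topology \<Rightarrow> 'a set set" where
  "TM_null S = {A. meager_in S A}"

definition TM_meas :: "'a topology \<Rightarrow> 'a set set" where
  "TM_meas S = {(U - A) \<union> (A - U) | U A. openin S U \<and> meager_in S A}"

end

theory Submission
  imports Defs
begin

lemma nd_iff:
  "nowhere_dense_in X A \<longleftrightarrow> A \<subseteq> topspace X \<and>
     (\<forall>T. openin X T \<and> T \<subseteq> X closure_of A \<longrightarrow> T = {})"
  unfolding nowhere_dense_in_def interior_of_eq_empty by blast

lemma nd_subset: "nowhere_dense_in X B \<Longrightarrow> A \<subseteq> B \<Longrightarrow> nowhere_dense_in X A"
  unfolding nd_iff by (meson closure_of_mono subset_trans)

lemma open_nd_empty: "openin X T \<Longrightarrow> nowhere_dense_in X T \<Longrightarrow> T = {}"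
  unfolding nd_iff by (meson closure_of_subset openin_subset)

lemma nd_imp_meager: "nowhere_dense_in X A \<Longrightarrow> meager_in X A"
  unfolding meager_in_def
  by (rule conjI, simp add: nowhere_dense_in_def, rule exI[of _ "\<lambda>n. A"], auto)

lemma reg_nbhd:
  assumes "regular_space X" "openin X W" "x \<in> W"
  shows "\<exists>U. openin X U \<and> x \<in> U \<and> X closure_of U \<subseteq> W"
proof -
  have "closedin X (topspace X - W)" "x \<in> topspace X - (topspace X - W)"
    using assms openin_subset by auto
  then obtain U where "openin X U" "x \<in> U" "disjnt (topspace X - W) (X closure_of U)"
    using assms(1) unfolding regular_space by blast
  moreover have "X closure_of U \<subseteq> topspace X" by (simp add: closure_of_subset_topspace)
  ultimately show ?thesis unfolding disjnt_def by blast
qed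

lemma closure_open_inter_dense:
  assumes "openin X W" "openin X G" "X closure_of G = topspace X"
  shows "X closure_of (W \<inter> G) = X closure_of W"
proof
  show "X closure_of (W \<inter> G) \<subseteq> X closure_of W" by (simp add: closure_of_mono)
  have "W \<subseteq> X closure_of (W \<inter> G)"
  proof
    fix x assume x: "x \<in> W"
    show "x \<in> X closure_of (W \<inter> G)"
      unfolding in_closure_of
    proof (intro conjI allI impI)
      show "x \<in> topspace X" using x assms openin_subset by blast
      fix T assume T: "x \<in> T \<and> openin X T"
      then have "openin X (T \<inter> W)" "x \<in> T \<inter> W" using assms x by auto
      moreover have "x \<in> X closure_of G" using assms x openin_subset by blast
      ultimately obtain y where "y \<in> G" "y \<in> T \<inter> W" unfolding in_closure_of by blast
      then show "\<exists>y. y \<in> W \<inter> G \<and> y \<in> T" by blast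
    qed
  qed
  then show "X closure_of W \<subseteq> X closure_of (W \<inter> G)"
    by (metis closure_of_closure_of closure_of_mono)
qed

lemma nom_props:
  assumes "normal_open_measure X \<nu>"
  shows nom_nonneg: "openin X V \<Longrightarrow> \<nu> V \<ge> 0"
    and nom_empty: "\<nu> {} = 0"
    and nom_modular: "openin X U1 \<Longrightarrow> openin X U2 \<Longrightarrow> \<nu> U1 + \<nu> U2 = \<nu> (U1 \<union> U2) + \<nu> (U1 \<inter> U2)"
    and nom_mono: "openin X U1 \<Longrightarrow> openin X U2 \<Longrightarrow> U1 \<subseteq> U2 \<Longrightarrow> \<nu> U1 \<le> \<nu> U2"
    and nom_sup: "D \<noteq> {} \<Longrightarrow> (\<forall>V\<in>D. openin X V) \<Longrightarrow> (\<forall>A\<in>D. \<forall>B\<in>D. \<exists>C\<in>D. A \<union> B \<subseteq> C) \<Longrightarrow>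
        \<nu> (\<Union>D) = (SUP V\<in>D. \<nu> V)"
    and nom_closure: "openin X V \<Longrightarrow> \<nu> (X closure_of V) = \<nu> V"
  using assms unfolding normal_open_measure_def by simp_all

lemma nom_bound: "normal_open_measure X \<nu> \<Longrightarrow> openin X V \<Longrightarrow> \<nu> V \<le> \<nu> (topspace X)"
  by (rule nom_mono[OF _ _ _ openin_subset]) auto

lemma nom_subadd: "normal_open_measure X \<nu> \<Longrightarrow> openin X A \<Longrightarrow> openin X B \<Longrightarrow> \<nu> (A \<union> B) \<le> \<nu> A + \<nu> B"
  using nom_modular[of X \<nu> A B] nom_nonneg[of X \<nu> "A \<inter> B"] openin_Int[of X A B] by linarith

lemma nom_add: "normal_open_measure X \<nu> \<Longrightarrow> openin X A \<Longrightarrow> openin X B \<Longrightarrow> A \<inter> B = {} \<Longrightarrow> \<nu> (A \<union> B) = \<nu> A + \<nu> B"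
  using nom_modular[of X \<nu> A B] nom_empty[of X \<nu>] by simp

lemma nom_chain:
  fixes V :: "nat \<Rightarrow> 'a set"
  assumes nu: "normal_open_measure X \<nu>" and op: "\<And>k. openin X (V k)" and mo: "mono V"
  shows "\<nu> (\<Union>k. V k) = (SUP k. \<nu> (V k))"
proof -
  have "\<nu> (\<Union>(range V)) = (SUP W\<in>range V. \<nu> W)"
  proof (rule nom_sup[OF nu])
    show "\<forall>A\<in>range V. \<forall>B\<in>range V. \<exists>C\<in>range V. A \<union> B \<subseteq> C"
    proof (intro ballI)
      fix A B assume "A \<in> range V" "B \<in> range V"
      then obtain i j where "A = V i" "B = V j" by auto
      moreover have "V i \<subseteq> V (max i j)" by (rule monoD[OF mo]) simp
      moreover have "V j \<subseteq> V (max i j)" by (rule monoD[OF mo]) simp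
      ultimately have "A \<union> B \<subseteq> V (max i j)" by blast
      then show "\<exists>C\<in>range V. A \<union> B \<subseteq> C" by blast
    qed
  next
    show "range V \<noteq> {}" by simp
    show "\<forall>W\<in>range V. openin X W" using op by blast
  qed
  then show ?thesis by (simp add: image_comp)
qed

lemma nom_bdd: "normal_open_measure X \<nu> \<Longrightarrow> (\<forall>V\<in>D. openin X V) \<Longrightarrow> bdd_above (\<nu> ` D)"
  by (rule bdd_aboveI[where M="\<nu> (topspace X)"]) (metis imageE nom_bound)



locale hs =
  fixes S :: "'a topology"
  assumes hyp: "hyperstonean S"
begin

lemma compact: "compact_space S" and haus: "Hausdorff_space S"
  and clopen: "openin S U \<Longrightarrow> openin S (S closure_of U)"
  and measures: "openin S U \<Longrightarrow> U \<noteq> {} \<Longrightarrow> \<exists>\<nu>. normal_open_measure S \<nu> \<and> \<nu> U \<noteq> 0"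
  using hyp unfolding hyperstonean_def by auto

lemma regular: "regular_space S"
  using compact haus compact_Hausdorff_imp_regular_space by blast

lemma nd_Union:
  fixes F :: "nat \<Rightarrow> 'a set"
  assumes nd: "\<And>n. nowhere_dense_in S (F n)"
  shows "nowhere_dense_in S (\<Union>n. F n)"
proof -
  let ?X = "topspace S"
  have sub: "(\<Union>n. F n) \<subseteq> ?X" using nd unfolding nowhere_dense_in_def by blast
  show ?thesis unfolding nd_iff
  proof (intro conjI sub allI impI)
    fix W assume W: "openin S W \<and> W \<subseteq> S closure_of (\<Union>n. F n)"
    show "W = {}"
    proof (rule ccontr)
      assume Wne: "W \<noteq> {}"
      obtain \<nu> where nu: "normal_open_measure S \<nu>" and nW: "\<nu> W \<noteq> 0"
        using measures W Wne by blast
      have wpos: "\<nu> W > 0" using nom_nonneg[OF nu, of W] W nW by linarith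
      define G where "G n = ?X - S closure_of F n" for n
      have Gopen: "openin S (G n)" for n unfolding G_def by (intro openin_diff) auto
      have Gdense: "S closure_of (G n) = ?X" for n
      proof
        show "S closure_of G n \<subseteq> ?X" by (rule closure_of_subset_topspace)
        show "?X \<subseteq> S closure_of G n"
        proof
          fix x assume x: "x \<in> ?X"
          show "x \<in> S closure_of G n"
            unfolding in_closure_of
          proof (intro conjI x allI impI)
            fix T assume T: "x \<in> T \<and> openin S T"
            show "\<exists>y. y \<in> G n \<and> y \<in> T"
            proof (rule ccontr)
              assume "\<not> (\<exists>y. y \<in> G n \<and> y \<in> T)"
              then have "T \<subseteq> S closure_of F n" using T openin_subset unfolding G_def by blast
              then have "T = {}" using nd[of n] T unfolding nd_iff by blast
              then show False using T by blast
            qed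
          qed
        qed
      qed
      have nuWG: "\<nu> (W \<inter> G n) = \<nu> W" for n
      proof -
        have "\<nu> (W \<inter> G n) = \<nu> (S closure_of (W \<inter> G n))"
          using nom_closure[OF nu openin_Int[OF W[THEN conjunct1] Gopen]] by simp
        also have "\<dots> = \<nu> (S closure_of W)"
          using closure_open_inter_dense[of S W "G n"] W Gopen Gdense by simp
        also have "\<dots> = \<nu> W" using nom_closure[OF nu, of W] W by simp
        finally show ?thesis .
      qed
      define \<delta> where "\<delta> n = \<nu> W / 2 ^ (n + 2)" for n :: nat
      have dpos: "\<delta> n > 0" for n unfolding \<delta>_def using wpos by simp
      have "\<forall>n. \<exists>U. openin S U \<and> S closure_of U \<subseteq> W \<inter> G n \<and> \<nu> W - \<delta> n < \<nu> U"
      proof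
        fix n
        define D where "D = {U. openin S U \<and> S closure_of U \<subseteq> W \<inter> G n}"
        have UD: "\<Union>D = W \<inter> G n"
        proof
          show "\<Union>D \<subseteq> W \<inter> G n"
          proof
            fix x assume "x \<in> \<Union>D"
            then obtain V where "V \<in> D" "x \<in> V" by blast
            then have "openin S V" "S closure_of V \<subseteq> W \<inter> G n" unfolding D_def by auto
            moreover have "V \<subseteq> S closure_of V" using closure_of_subset[OF openin_subset[OF \<open>openin S V\<close>]] .
            ultimately show "x \<in> W \<inter> G n" using \<open>x \<in> V\<close> by blast
          qed
          show "W \<inter> G n \<subseteq> \<Union>D"
          proof
            fix x assume "x \<in> W \<inter> G n"
            then obtain U where "openin S U" "x \<in> U" "S closure_of U \<subseteq> W \<inter> G n"
              using reg_nbhd[OF regular, of "W \<inter> G n" x] W Gopen by blast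
            then show "x \<in> \<Union>D" unfolding D_def by blast
          qed
        qed
        have "{} \<in> D" unfolding D_def by simp
        then have Dne: "D \<noteq> {}" by blast
        have Dop: "\<forall>V\<in>D. openin S V" unfolding D_def by blast
        have Ddir: "\<forall>A\<in>D. \<forall>B\<in>D. \<exists>C\<in>D. A \<union> B \<subseteq> C"
        proof (intro ballI)
          fix A B assume "A \<in> D" "B \<in> D"
          then have "A \<union> B \<in> D" unfolding D_def by auto
          then show "\<exists>C\<in>D. A \<union> B \<subseteq> C" by blast
        qed
        have "\<nu> W = (SUP V\<in>D. \<nu> V)"
          using nom_sup[OF nu Dne Dop Ddir] UD nuWG[of n] by simp
        then have "\<nu> W - \<delta> n < (SUP V\<in>D. \<nu> V)" using dpos[of n] by linarith
        then obtain U where "U \<in> D" "\<nu> W - \<delta> n < \<nu> U"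
          using less_cSUP_iff[OF Dne nom_bdd[OF nu Dop]] by blast
        then show "\<exists>U. openin S U \<and> S closure_of U \<subseteq> W \<inter> G n \<and> \<nu> W - \<delta> n < \<nu> U"
          unfolding D_def by blast
      qed
      from choice[OF this] obtain U where U0: "\<forall>n. openin S (U n) \<and> S closure_of (U n) \<subseteq> W \<inter> G n \<and> \<nu> W - \<delta> n < \<nu> (U n)"
        by blast
      have U: "\<And>n. openin S (U n)" "\<And>n. S closure_of (U n) \<subseteq> W \<inter> G n"
        "\<And>n. \<nu> W - \<delta> n < \<nu> (U n)" using U0 by blast+
      define H where "H n = W - S closure_of (U n)" for n
      have Hopen: "openin S (H n)" for n unfolding H_def using W by (intro openin_diff) auto
      have Hsmall: "\<nu> (H n) \<le> \<delta> n" for n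
      proof -
        have "U n \<subseteq> S closure_of (U n)" using U(1) closure_of_subset openin_subset by metis
        then have "H n \<inter> U n = {}" "H n \<union> U n \<subseteq> W" unfolding H_def using U(2)[of n] by auto
        moreover have "openin S (H n \<union> U n)" using Hopen U(1) by blast
        ultimately have "\<nu> (H n) + \<nu> (U n) \<le> \<nu> W"
          using nom_add[OF nu Hopen U(1), of n n] nom_mono[OF nu _ W[THEN conjunct1], of "H n \<union> U n"]
          by simp
        then show ?thesis using U(3)[of n] by linarith
      qed
      define P where "P k = (\<Union>n<k. H n)" for k
      have Popen: "openin S (P k)" for k unfolding P_def using Hopen by (intro openin_Union) auto
      have Pbound: "\<nu> (P k) \<le> \<nu> W / 2 * (1 - 1 / 2 ^ k)" for k
      proof (induction k)
        case 0
        then show ?case by (simp add: P_def nom_empty[OF nu])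
      next
        case (Suc k)
        have "P (Suc k) = P k \<union> H k" unfolding P_def by (simp add: lessThan_Suc Un_commute)
        then have "\<nu> (P (Suc k)) \<le> \<nu> (P k) + \<nu> (H k)"
          using nom_subadd[OF nu Popen Hopen] by simp
        also have "\<dots> \<le> \<nu> W / 2 * (1 - 1 / 2 ^ k) + \<nu> W / 2 ^ (k + 2)"
          using Suc Hsmall[of k] unfolding \<delta>_def by linarith
        also have "\<dots> = \<nu> W / 2 * (1 - 1 / 2 ^ Suc k)"
          by (simp add: field_simps)
        finally show ?case .
      qed
      have Pmono: "mono P" unfolding P_def by (intro monoI UN_mono) auto
      have HP: "(\<Union>n. H n) = (\<Union>k. P k)" unfolding P_def by auto
      have Hopen_all: "openin S (\<Union>n. H n)" using Hopen by (intro openin_Union) auto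
      have nuH: "\<nu> (\<Union>n. H n) \<le> \<nu> W / 2"
      proof -
        have "\<nu> (\<Union>n. H n) = (SUP k. \<nu> (P k))" using HP nom_chain[OF nu Popen Pmono] by simp
        also have "\<dots> \<le> \<nu> W / 2"
        proof (rule cSUP_least)
          fix k
          have "\<nu> W / 2 * (1 - 1 / 2 ^ k) \<le> \<nu> W / 2" using wpos by (simp add: field_simps)
          then show "\<nu> (P k) \<le> \<nu> W / 2" using Pbound[of k] by linarith
        qed simp
        finally show ?thesis .
      qed
      have "\<exists>V. openin S V \<and> V \<noteq> {} \<and> V \<subseteq> W \<and> (\<forall>n. V \<subseteq> S closure_of (U n))"
      proof (rule ccontr)
        assume no: "\<not> ?thesis"
        have HW: "(\<Union>n. H n) \<subseteq> W" unfolding H_def by blast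
        have "W \<subseteq> S closure_of (\<Union>n. H n)"
        proof
          fix x assume x: "x \<in> W"
          show "x \<in> S closure_of (\<Union>n. H n)"
            unfolding in_closure_of
          proof (intro conjI allI impI)
            show "x \<in> ?X" using x W openin_subset by blast
            fix T assume T: "x \<in> T \<and> openin S T"
            then have "openin S (T \<inter> W)" "T \<inter> W \<noteq> {}" "T \<inter> W \<subseteq> W" using W x by auto
            then obtain n where "\<not> T \<inter> W \<subseteq> S closure_of (U n)" using no by blast
            then obtain y where "y \<in> T" "y \<in> W" "y \<notin> S closure_of (U n)" by blast
            then show "\<exists>y. y \<in> (\<Union>n. H n) \<and> y \<in> T" unfolding H_def by blast
          qed
        qed
        then have "S closure_of W \<subseteq> S closure_of (\<Union>n. H n)"
          by (metis closure_of_closure_of closure_of_mono)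
        moreover have "S closure_of (\<Union>n. H n) \<subseteq> S closure_of W" using HW closure_of_mono by blast
        ultimately have "S closure_of (\<Union>n. H n) = S closure_of W" by blast
        then have "\<nu> (\<Union>n. H n) = \<nu> W"
          using nom_closure[OF nu Hopen_all] nom_closure[OF nu W[THEN conjunct1]] by simp
        then show False using nuH wpos by linarith
      qed
      then obtain V where V: "openin S V" "V \<noteq> {}" "V \<subseteq> W" "\<And>n. V \<subseteq> S closure_of (U n)" by blast
      then obtain x where x: "x \<in> V" by blast
      then have "x \<in> S closure_of (\<Union>n. F n)" using V W by blast
      then obtain y where y: "y \<in> (\<Union>n. F n)" "y \<in> V" unfolding in_closure_of using V x by blast
      then obtain m where m: "y \<in> F m" by blast
      have "F m \<subseteq> ?X" using nd[of m] unfolding nowhere_dense_in_def by blast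
      then have "y \<in> S closure_of F m" using m closure_of_subset by blast
      moreover have "y \<in> G m" using V(4)[of m] U(2)[of m] y by blast
      ultimately show False unfolding G_def by blast
    qed
  qed
qed

end


context hs
begin

lemma meager_nd: "meager_in S A \<longleftrightarrow> nowhere_dense_in S A"
proof
  assume "meager_in S A"
  then obtain F :: "nat \<Rightarrow> 'a set" where "\<forall>n. nowhere_dense_in S (F n)" "A \<subseteq> (\<Union>n. F n)"
    unfolding meager_in_def by blast
  then show "nowhere_dense_in S A" using nd_Union nd_subset by metis
qed (rule nd_imp_meager)

lemma nd_Un2: "nowhere_dense_in S A \<Longrightarrow> nowhere_dense_in S B \<Longrightarrow> nowhere_dense_in S (A \<union> B)"
proof -
  assume "nowhere_dense_in S A" "nowhere_dense_in S B"
  then have "nowhere_dense_in S (\<Union>n. (\<lambda>n::nat. if n = 0 then A else B) n)"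
    by (intro nd_Union) auto
  moreover have "(\<Union>n. (\<lambda>n::nat. if n = 0 then A else B) n) = A \<union> B"
    by (auto split: if_splits)
  ultimately show ?thesis by simp
qed

lemma nd_empty: "nowhere_dense_in S {}"
  unfolding nd_iff by simp

lemma M_iff: "m \<in> TM_meas S \<longleftrightarrow> (\<exists>U. openin S U \<and> nowhere_dense_in S ((m - U) \<union> (U - m)))"
proof
  assume "m \<in> TM_meas S"
  then obtain U A where "m = (U - A) \<union> (A - U)" "openin S U" "meager_in S A"
    unfolding TM_meas_def by blast
  moreover have "(m - U) \<union> (U - m) = A" using calculation(1) by blast
  ultimately show "\<exists>U. openin S U \<and> nowhere_dense_in S ((m - U) \<union> (U - m))"
    using meager_nd by metis
next
  assume "\<exists>U. openin S U \<and> nowhere_dense_in S ((m - U) \<union> (U - m))"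
  then obtain U where U: "openin S U" "nowhere_dense_in S ((m - U) \<union> (U - m))" by blast
  define A where "A = (m - U) \<union> (U - m)"
  have "m = (U - A) \<union> (A - U)" unfolding A_def by blast
  moreover have "meager_in S A" using U meager_nd unfolding A_def by blast
  ultimately show "m \<in> TM_meas S" unfolding TM_meas_def using U(1) by blast
qed

lemma M_sub: "m \<in> TM_meas S \<Longrightarrow> m \<subseteq> topspace S"
  unfolding M_iff nowhere_dense_in_def using openin_subset by blast

lemma open_M: "openin S U \<Longrightarrow> U \<in> TM_meas S"
  unfolding M_iff using nd_empty by (intro exI[of _ U]) simp

lemma nd_M: "nowhere_dense_in S A \<Longrightarrow> A \<in> TM_meas S"
  unfolding M_iff by (intro exI[of _ "{}"]) simp

lemma N_iff: "A \<in> TM_null S \<longleftrightarrow> nowhere_dense_in S A"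
  unfolding TM_null_def using meager_nd by simp

lemma closed_minus_interior_nd:
  assumes "closedin S C" shows "nowhere_dense_in S (C - S interior_of C)"
  unfolding nd_iff
proof (intro conjI allI impI)
  show "C - S interior_of C \<subseteq> topspace S" using assms closedin_subset by blast
  fix T assume T: "openin S T \<and> T \<subseteq> S closure_of (C - S interior_of C)"
  have "S closure_of (C - S interior_of C) \<subseteq> C"
    using assms by (intro closure_of_minimal) auto
  then have "T \<subseteq> S interior_of C" using T interior_of_maximal by blast
  moreover have "S interior_of C \<inter> S closure_of (C - S interior_of C) = {}"
    using openin_Int_closure_of_eq_empty[of S "S interior_of C" "C - S interior_of C"] by auto
  ultimately show "T = {}" using T by blast
qed

lemma M_compl: "m \<in> TM_meas S \<Longrightarrow> topspace S - m \<in> TM_meas S"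
proof -
  assume "m \<in> TM_meas S"
  then obtain U where U: "openin S U" "nowhere_dense_in S ((m - U) \<union> (U - m))" unfolding M_iff by blast
  let ?C = "topspace S - U"
  let ?U' = "S interior_of ?C"
  have C: "closedin S ?C" using U by blast
  have sub: "((topspace S - m) - ?U') \<union> (?U' - (topspace S - m)) \<subseteq> ((m - U) \<union> (U - m)) \<union> (?C - ?U')"
    using interior_of_subset[of S ?C] by blast
  have nd: "nowhere_dense_in S (((m - U) \<union> (U - m)) \<union> (?C - ?U'))"
    using nd_Un2[OF U(2) closed_minus_interior_nd[OF C]] .
  show ?thesis unfolding M_iff
    by (intro exI[of _ ?U'] conjI openin_interior_of nd_subset[OF nd sub])
qed

lemma M_Union:
  fixes A :: "nat \<Rightarrow> 'a set"
  assumes "\<And>n. A n \<in> TM_meas S"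
  shows "(\<Union>n. A n) \<in> TM_meas S"
proof -
  have "\<forall>n. \<exists>U. openin S U \<and> nowhere_dense_in S ((A n - U) \<union> (U - A n))"
    using assms unfolding M_iff by blast
  from choice[OF this] obtain U where U: "\<And>n. openin S (U n)"
    "\<And>n. nowhere_dense_in S ((A n - U n) \<union> (U n - A n))" by blast
  have sub: "((\<Union>n. A n) - (\<Union>n. U n)) \<union> ((\<Union>n. U n) - (\<Union>n. A n)) \<subseteq> (\<Union>n. (A n - U n) \<union> (U n - A n))"
    by blast
  have nd: "nowhere_dense_in S (\<Union>n. (A n - U n) \<union> (U n - A n))"
    using nd_Union[of "\<lambda>n. (A n - U n) \<union> (U n - A n)"] U(2) by simp
  have op: "openin S (\<Union>n. U n)" using U(1) by (intro openin_Union) auto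
  show ?thesis unfolding M_iff
    by (intro exI[of _ "\<Union>n. U n"] conjI op nd_subset[OF nd sub])
qed

lemma sigma: "sigma_algebra (topspace S) (TM_meas S)"
  unfolding sigma_algebra_iff2
  using M_sub open_M[of "{}"] M_compl M_Union by (auto simp: range_subsetD)

lemma ems: "enhanced_measurable_space (topspace S) (TM_meas S) (TM_null S)"
  unfolding enhanced_measurable_space_def
proof (intro conjI)
  show "sigma_algebra (topspace S) (TM_meas S)" by (rule sigma)
  show "TM_null S \<subseteq> TM_meas S" using N_iff nd_M by blast
  show "\<forall>A B. B \<in> TM_null S \<longrightarrow> A \<subseteq> B \<longrightarrow> A \<in> TM_null S"
    using N_iff nd_subset by blast
  show "\<forall>F::nat \<Rightarrow> 'a set. range F \<subseteq> TM_null S \<longrightarrow> (\<Union>n. F n) \<in> TM_null S"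
  proof (intro allI impI)
    fix F :: "nat \<Rightarrow> 'a set" assume "range F \<subseteq> TM_null S"
    then have "\<And>n. nowhere_dense_in S (F n)" using N_iff by blast
    then show "(\<Union>n. F n) \<in> TM_null S" using N_iff nd_Union by blast
  qed
qed

lemma open_nonempty_not_nd: "openin S U \<Longrightarrow> U \<noteq> {} \<Longrightarrow> \<not> nowhere_dense_in S U"
  using open_nd_empty by blast

lemma compact_ems: "compact_ems (TM_meas S) (TM_null S)"
  unfolding compact_ems_def
proof (intro exI conjI)
  let ?K = "{C. closedin S C}"
  show "?K \<subseteq> TM_meas S"
  proof
    fix C assume "C \<in> ?K"
    then have "topspace S - C \<in> TM_meas S" using open_M by blast
    then have "topspace S - (topspace S - C) \<in> TM_meas S" by (rule M_compl)
    moreover have "topspace S - (topspace S - C) = C" using \<open>C \<in> ?K\<close> closedin_subset by blast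
    ultimately show "C \<in> TM_meas S" by simp
  qed
  show "compact_class ?K"
    unfolding compact_class_def
  proof (intro allI impI)
    fix F assume F: "F \<subseteq> ?K" and fip: "\<forall>G. G \<subseteq> F \<longrightarrow> finite G \<longrightarrow> G \<noteq> {} \<longrightarrow> \<Inter>G \<noteq> {}"
    have h1: "\<forall>G. finite G \<and> G \<subseteq> F \<longrightarrow> \<Inter>G \<noteq> {}"
      using fip by auto
    have h2: "\<forall>C\<in>F. closedin S C" using F by blast
    note key = spec[OF compact[unfolded compact_space_fip], of F]
    show "\<Inter>F \<noteq> {}" by (rule mp[OF key conjI[OF h2 h1]])
  qed
  show "\<forall>m\<in>TM_meas S - TM_null S. \<exists>k\<in>?K - TM_null S. k \<subseteq> m"
  proof
    fix m assume m: "m \<in> TM_meas S - TM_null S"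
    then have "m \<in> TM_meas S" by blast
    then obtain U where U: "openin S U" "nowhere_dense_in S ((m - U) \<union> (U - m))" unfolding M_iff by blast
    let ?A = "(m - U) \<union> (U - m)"
    let ?W = "U - S closure_of ?A"
    have Wopen: "openin S ?W" using U by (intro openin_diff) auto
    have "?W \<noteq> {}"
    proof
      assume "?W = {}"
      then have "U \<subseteq> S closure_of ?A" by blast
      then have "U = {}" using U unfolding nd_iff by blast
      then have "nowhere_dense_in S m" using U(2) by simp
      then show False using m N_iff by blast
    qed
    then obtain x where x: "x \<in> ?W" by blast
    obtain V where V: "openin S V" "x \<in> V" "S closure_of V \<subseteq> ?W"
      using reg_nbhd[OF regular Wopen x] by blast
    have "V \<subseteq> S closure_of V" using closure_of_subset[OF openin_subset[OF V(1)]] .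
    then have nn: "\<not> nowhere_dense_in S (S closure_of V)"
      using V open_nonempty_not_nd nd_subset by blast
    have "?A \<subseteq> topspace S" using U(2) unfolding nowhere_dense_in_def by (elim conjE)
    then have "?A \<subseteq> S closure_of ?A" by (rule closure_of_subset)
    then have "?W \<subseteq> m" by blast
    then have sub: "S closure_of V \<subseteq> m" using V(3) by (rule order_trans[rotated])
    have "S closure_of V \<in> ?K - TM_null S" using nn by (simp add: N_iff)
    then show "\<exists>k\<in>?K - TM_null S. k \<subseteq> m" using sub by (rule bexI[rotated])
  qed
qed

end


context hs
begin

definition rep :: "'a set \<Rightarrow> 'a set" where
  "rep m = (SOME U. openin S U \<and> nowhere_dense_in S ((m - U) \<union> (U - m)))"

lemma rep_spec: "m \<in> TM_meas S \<Longrightarrow> openin S (rep m) \<and> nowhere_dense_in S ((m - rep m) \<union> (rep m - m))"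
  unfolding rep_def M_iff by (rule someI_ex)

lemma rep_unique:
  assumes nu: "normal_open_measure S \<nu>"
    and U: "openin S U" "nowhere_dense_in S ((m - U) \<union> (U - m))"
    and U': "openin S U'" "nowhere_dense_in S ((m - U') \<union> (U' - m))"
  shows "\<nu> U = \<nu> U'"
proof -
  have sub0: "((U - U') \<union> (U' - U)) \<subseteq> ((m - U) \<union> (U - m)) \<union> ((m - U') \<union> (U' - m))" by blast
  have nd: "nowhere_dense_in S ((U - U') \<union> (U' - U))"
    by (rule nd_subset[OF nd_Un2[OF U(2) U'(2)] sub0])
  have half: "S closure_of V \<subseteq> S closure_of V'"
    if V: "openin S V" "openin S V'" "nowhere_dense_in S ((V - V') \<union> (V' - V))" for V V'
  proof -
    have "V' \<subseteq> S closure_of V'" using closure_of_subset[OF openin_subset[OF V(2)]] .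
    then have sub1: "V - S closure_of V' \<subseteq> (V - V') \<union> (V' - V)" by blast
    have op1: "openin S (V - S closure_of V')" using V by (intro openin_diff) auto
    have "V - S closure_of V' = {}" by (rule open_nd_empty[OF op1 nd_subset[OF V(3) sub1]])
    then have "V \<subseteq> S closure_of V'" by blast
    then have "S closure_of V \<subseteq> S closure_of (S closure_of V')" by (rule closure_of_mono)
    then show ?thesis by simp
  qed
  have nd': "nowhere_dense_in S ((U' - U) \<union> (U - U'))" using nd by (simp add: Un_commute)
  have "S closure_of U = S closure_of U'"
    using half[OF U(1) U'(1) nd] half[OF U'(1) U(1) nd'] by (rule subset_antisym)
  then show ?thesis using nom_closure[OF nu U(1)] nom_closure[OF nu U'(1)] by simp
qed

lemma rep_measure:
  assumes nu: "normal_open_measure S \<nu>" and m: "m \<in> TM_meas S"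
    and U: "openin S U" "nowhere_dense_in S ((m - U) \<union> (U - m))"
  shows "\<nu> (rep m) = \<nu> U"
  using rep_unique[OF nu _ _ U] rep_spec[OF m] by blast

lemma rep_null: "normal_open_measure S \<nu> \<Longrightarrow> nowhere_dense_in S A \<Longrightarrow> \<nu> (rep A) = 0"
  using rep_measure[of \<nu> A "{}"] nd_M nom_empty by simp

lemma nom_finite_sum:
  fixes U :: "nat \<Rightarrow> 'a set"
  assumes nu: "normal_open_measure S \<nu>" and op: "\<And>n. openin S (U n)"
    and disj: "\<And>i j. i \<noteq> j \<Longrightarrow> U i \<inter> U j = {}"
  shows "\<nu> (\<Union>n<k. U n) = (\<Sum>n<k. \<nu> (U n))"
proof (induction k)
  case 0
  then show ?case using nom_empty[OF nu] by simp
next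
  case (Suc k)
  have "(\<Union>n<Suc k. U n) = (\<Union>n<k. U n) \<union> U k" by (simp add: lessThan_Suc Un_commute)
  moreover have "(\<Union>n<k. U n) \<inter> U k = {}"
  proof -
    have "U n \<inter> U k = {}" if "n < k" for n using disj[of n k] that by simp
    then show ?thesis by blast
  qed
  moreover have "openin S (\<Union>n<k. U n)" using op by (intro openin_Union) auto
  ultimately have "\<nu> (\<Union>n<Suc k. U n) = \<nu> (\<Union>n<k. U n) + \<nu> (U k)"
    using nom_add[OF nu _ op] by simp
  then show ?case using Suc by simp
qed

lemma countably_additive:
  fixes F :: "nat \<Rightarrow> 'a set"
  assumes nu: "normal_open_measure S \<nu>" and FM: "\<And>n. F n \<in> TM_meas S" and dF: "disjoint_family F"
  shows "(\<lambda>n. \<nu> (rep (F n))) sums \<nu> (rep (\<Union>n. F n))"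
proof -
  define U where "U n = rep (F n)" for n
  have op: "openin S (U n)" and ndU: "nowhere_dense_in S ((F n - U n) \<union> (U n - F n))" for n
    using rep_spec[OF FM[of n]] unfolding U_def by auto
  have disj: "U i \<inter> U j = {}" if "i \<noteq> j" for i j
  proof -
    have "F i \<inter> F j = {}" using dF that unfolding disjoint_family_on_def by blast
    then have "U i \<inter> U j \<subseteq> ((F i - U i) \<union> (U i - F i)) \<union> ((F j - U j) \<union> (U j - F j))" by blast
    moreover have "openin S (U i \<inter> U j)" using op by blast
    ultimately show ?thesis using open_nd_empty nd_subset nd_Un2[OF ndU[of i] ndU[of j]] by metis
  qed
  have UM: "(\<Union>n. F n) \<in> TM_meas S" using M_Union FM by blast
  have opU: "openin S (\<Union>n. U n)" using op by (intro openin_Union) auto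
  have "nowhere_dense_in S (\<Union>n. (F n - U n) \<union> (U n - F n))"
    using nd_Union[of "\<lambda>n. (F n - U n) \<union> (U n - F n)"] ndU by simp
  then have "nowhere_dense_in S (((\<Union>n. F n) - (\<Union>n. U n)) \<union> ((\<Union>n. U n) - (\<Union>n. F n)))"
    by (rule nd_subset) blast
  then have eq: "\<nu> (rep (\<Union>n. F n)) = \<nu> (\<Union>n. U n)"
    using rep_measure[OF nu UM opU] by blast
  define P where "P k = (\<Union>n<k. U n)" for k
  have Popen: "openin S (P k)" for k unfolding P_def using op by (intro openin_Union) auto
  have Pmono: "mono P" unfolding P_def by (intro monoI UN_mono) auto
  have "(\<Union>n. U n) = (\<Union>k. P k)" unfolding P_def by auto
  then have sup: "\<nu> (\<Union>n. U n) = (SUP k. \<nu> (P k))" using nom_chain[OF nu Popen Pmono] by simp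
  have Psum: "\<nu> (P k) = (\<Sum>n<k. \<nu> (U n))" for k
    unfolding P_def using nom_finite_sum[of \<nu> U k] nu op disj by blast
  have "(\<lambda>k. \<Sum>n<k. \<nu> (U n)) \<longlonglongrightarrow> (SUP k. \<nu> (P k))"
  proof -
    have "(\<lambda>k. \<nu> (P k)) \<longlonglongrightarrow> (SUP k. \<nu> (P k))"
    proof (rule LIMSEQ_incseq_SUP)
      show "bdd_above (range (\<lambda>k. \<nu> (P k)))"
      proof (rule bdd_aboveI[where M="\<nu> (topspace S)"])
        fix x assume "x \<in> range (\<lambda>k. \<nu> (P k))"
        then obtain k where "x = \<nu> (P k)" by blast
        then show "x \<le> \<nu> (topspace S)" using nom_bound[OF nu Popen[of k]] by simp
      qed
      show "incseq (\<lambda>k. \<nu> (P k))"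
      proof (rule incseq_SucI)
        fix k
        have "P k \<subseteq> P (Suc k)" by (rule monoD[OF Pmono]) simp
        then show "\<nu> (P k) \<le> \<nu> (P (Suc k))" using nom_mono[OF nu Popen Popen] by blast
      qed
    qed
    then show ?thesis using Psum by simp
  qed
  then show ?thesis unfolding sums_def U_def[symmetric] eq sup .
qed

lemma sigma_finite_piece:
  assumes nu: "normal_open_measure S \<nu>" and Yop: "openin S Y"
    and faith: "\<forall>V. openin S V \<and> V \<subseteq> Y \<and> V \<noteq> {} \<longrightarrow> \<nu> V \<noteq> 0"
  shows "ems_sigma_finite {A\<in>TM_meas S. A \<subseteq> Y} {A\<in>TM_null S. A \<subseteq> Y}"
  unfolding ems_sigma_finite_def
proof (intro exI conjI)
  let ?\<mu> = "\<lambda>m. complex_of_real (\<nu> (rep m))"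
  show "ems_finite_measure {A\<in>TM_meas S. A \<subseteq> Y} {A\<in>TM_null S. A \<subseteq> Y} ?\<mu>"
    unfolding ems_finite_measure_def
  proof (intro conjI allI impI ballI)
    fix F :: "nat \<Rightarrow> 'a set"
    assume "range F \<subseteq> {A\<in>TM_meas S. A \<subseteq> Y}" "disjoint_family F"
    then show "(\<lambda>n. ?\<mu> (F n)) sums ?\<mu> (\<Union>n. F n)"
      using countably_additive[OF nu, of F] by (simp add: sums_of_real_iff image_subset_iff)
  next
    fix A assume "A \<in> {A\<in>TM_null S. A \<subseteq> Y}"
    then show "?\<mu> A = 0" using rep_null[OF nu] N_iff by simp
  qed
  show "ems_faithful {A\<in>TM_meas S. A \<subseteq> Y} {A\<in>TM_null S. A \<subseteq> Y} ?\<mu>"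
    unfolding ems_faithful_def
  proof (intro ballI impI)
    fix m assume m: "m \<in> {A\<in>TM_meas S. A \<subseteq> Y}"
      and z: "\<forall>A\<in>{A\<in>TM_meas S. A \<subseteq> Y}. A \<subseteq> m \<longrightarrow> ?\<mu> A = 0"
    have mM: "m \<in> TM_meas S" "m \<subseteq> Y" using m by auto
    have "?\<mu> m = 0" using z m by blast
    then have r0: "\<nu> (rep m) = 0" by simp
    obtain U where U: "U = rep m" by blast
    have opU: "openin S U" and ndU: "nowhere_dense_in S ((m - U) \<union> (U - m))"
      using rep_spec[OF mM(1)] U by auto
    have opUY: "openin S (U \<inter> Y)" using opU Yop by blast
    have "\<nu> (U \<inter> Y) \<le> \<nu> U" using nom_mono[OF nu opUY opU] by blast
    moreover have "\<nu> (U \<inter> Y) \<ge> 0" using nom_nonneg[OF nu opUY] .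
    ultimately have "\<nu> (U \<inter> Y) = 0" using r0 U by simp
    then have "U \<inter> Y = {}" using faith opUY by blast
    then have "m \<subseteq> (m - U) \<union> (U - m)" using mM(2) by blast
    then have "nowhere_dense_in S m" using ndU nd_subset by blast
    then show "m \<in> {A\<in>TM_null S. A \<subseteq> Y}" using mM(2) N_iff by blast
  qed
qed

end


context hs
begin

definition good :: "'a set \<Rightarrow> bool" where
  "good Y \<longleftrightarrow> openin S Y \<and> Y \<noteq> {} \<and>
     (\<exists>\<nu>. normal_open_measure S \<nu> \<and> (\<forall>V. openin S V \<and> V \<subseteq> Y \<and> V \<noteq> {} \<longrightarrow> \<nu> V \<noteq> 0))"

lemma exists_good:
  assumes U: "openin S U" "U \<noteq> {}"
  shows "\<exists>Y. good Y \<and> Y \<subseteq> U"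
proof -
  obtain \<nu> where nu: "normal_open_measure S \<nu>" and nU: "\<nu> U \<noteq> 0" using measures U by blast
  define D where "D = {V. openin S V \<and> \<nu> V = 0}"
  have "{} \<in> D" unfolding D_def using nom_empty[OF nu] by simp
  then have Dne: "D \<noteq> {}" by blast
  have Dop: "\<forall>V\<in>D. openin S V" unfolding D_def by blast
  have Ddir: "\<forall>A\<in>D. \<forall>B\<in>D. \<exists>C\<in>D. A \<union> B \<subseteq> C"
  proof (intro ballI)
    fix A B assume A: "A \<in> D" and B: "B \<in> D"
    have opA: "openin S A" and opB: "openin S B" and zA: "\<nu> A = 0" and zB: "\<nu> B = 0"
      using A B unfolding D_def by auto
    have opAB: "openin S (A \<union> B)" using opA opB by blast
    have "\<nu> (A \<union> B) \<le> 0" using nom_subadd[OF nu opA opB] zA zB by simp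
    moreover have "\<nu> (A \<union> B) \<ge> 0" using nom_nonneg[OF nu opAB] .
    ultimately have "A \<union> B \<in> D" unfolding D_def using opAB by simp
    then show "\<exists>C\<in>D. A \<union> B \<subseteq> C" by blast
  qed
  define Oz where "Oz = \<Union>D"
  have opO: "openin S Oz" unfolding Oz_def using Dop by (intro openin_Union) auto
  have "(SUP V\<in>D. \<nu> V) = (SUP V\<in>D. (0::real))"
    by (rule SUP_cong) (auto simp: D_def)
  then have zO: "\<nu> Oz = 0" unfolding Oz_def using nom_sup[OF nu Dne Dop Ddir] Dne by simp
  have opcO: "openin S (S closure_of Oz)" using clopen[OF opO] .
  have zcO: "\<nu> (S closure_of Oz) = 0" using nom_closure[OF nu opO] zO by simp
  define Y where "Y = U - S closure_of Oz"
  have opY: "openin S Y" unfolding Y_def using U by (intro openin_diff) auto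
  have "Y \<noteq> {}"
  proof
    assume "Y = {}"
    then have "U \<subseteq> S closure_of Oz" unfolding Y_def by blast
    then have "\<nu> U \<le> 0" using nom_mono[OF nu U(1) opcO] zcO by simp
    moreover have "\<nu> U \<ge> 0" using nom_nonneg[OF nu U(1)] .
    ultimately show False using nU by simp
  qed
  moreover have "\<forall>V. openin S V \<and> V \<subseteq> Y \<and> V \<noteq> {} \<longrightarrow> \<nu> V \<noteq> 0"
  proof (intro allI impI)
    fix V assume V: "openin S V \<and> V \<subseteq> Y \<and> V \<noteq> {}"
    show "\<nu> V \<noteq> 0"
    proof
      assume "\<nu> V = 0"
      then have "V \<in> D" unfolding D_def using V by simp
      then have "V \<subseteq> Oz" unfolding Oz_def by blast
      moreover have "Oz \<subseteq> S closure_of Oz" using closure_of_subset[OF openin_subset[OF opO]] .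
      ultimately show False using V unfolding Y_def by blast
    qed
  qed
  ultimately have "good Y" unfolding good_def using opY nu by blast
  moreover have "Y \<subseteq> U" unfolding Y_def by blast
  ultimately show ?thesis by blast
qed

lemma good_sub: "good Y \<Longrightarrow> Y \<subseteq> topspace S"
  unfolding good_def using openin_subset by blast

lemma maximal_family:
  "\<exists>Fm. Fm \<subseteq> Collect good \<and> pairwise disjnt Fm \<and> S closure_of (\<Union>Fm) = topspace S"
proof -
  define \<A> where "\<A> = {F. F \<subseteq> Collect good \<and> pairwise disjnt F}"
  have "\<forall>C\<in>chains \<A>. \<Union>C \<in> \<A>"
  proof
    fix C assume C: "C \<in> chains \<A>"
    have "C \<subseteq> \<A>" "chain\<^sub>\<subseteq> C" using C unfolding chains_def by auto
    then have "pairwise disjnt (\<Union>C)" by (intro pairwise_chain_Union) (auto simp: \<A>_def)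
    moreover have "\<Union>C \<subseteq> Collect good" using \<open>C \<subseteq> \<A>\<close> unfolding \<A>_def by blast
    ultimately show "\<Union>C \<in> \<A>" unfolding \<A>_def by blast
  qed
  then obtain Fm where Fm: "Fm \<in> \<A>" and max: "\<forall>X\<in>\<A>. Fm \<subseteq> X \<longrightarrow> X = Fm"
    using Zorn_Lemma by blast
  have Fg: "Fm \<subseteq> Collect good" and Fd: "pairwise disjnt Fm" using Fm unfolding \<A>_def by auto
  have subT: "\<Union>Fm \<subseteq> topspace S" using Fg good_sub by blast
  have "S closure_of (\<Union>Fm) = topspace S"
  proof (rule ccontr)
    assume ne: "S closure_of (\<Union>Fm) \<noteq> topspace S"
    define U where "U = topspace S - S closure_of (\<Union>Fm)"
    have opU: "openin S U" unfolding U_def by (intro openin_diff) auto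
    have "U \<noteq> {}" using ne closure_of_subset_topspace[of S "\<Union>Fm"] unfolding U_def by blast
    then obtain Y where Y: "good Y" "Y \<subseteq> U" using exists_good opU by blast
    have cl: "\<Union>Fm \<subseteq> S closure_of (\<Union>Fm)" using closure_of_subset[OF subT] .
    have disjY: "disjnt Z Y" if "Z \<in> Fm" for Z
      using that cl Y(2) unfolding U_def disjnt_def by blast
    have "pairwise disjnt (insert Y Fm)"
      using Fd disjY by (simp add: pairwise_insert disjnt_sym)
    moreover have "insert Y Fm \<subseteq> Collect good" using Fg Y by blast
    ultimately have "insert Y Fm \<in> \<A>" unfolding \<A>_def by blast
    then have "insert Y Fm = Fm" using max by blast
    then have "Y \<in> Fm" by blast
    then have "Y \<subseteq> \<Union>Fm" by blast
    then have "Y = {}" using Y(2) cl unfolding U_def by blast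
    then show False using Y(1) unfolding good_def by blast
  qed
  then show ?thesis using Fg Fd by blast
qed

end


context hs
begin

lemma M_Un2: "A \<in> TM_meas S \<Longrightarrow> B \<in> TM_meas S \<Longrightarrow> A \<union> B \<in> TM_meas S"
proof -
  assume A: "A \<in> TM_meas S" and B: "B \<in> TM_meas S"
  have "(\<Union>n. (\<lambda>n::nat. if n = 0 then A else B) n) \<in> TM_meas S"
    by (rule M_Union) (use A B in auto)
  moreover have "(\<Union>n. (\<lambda>n::nat. if n = 0 then A else B) n) = A \<union> B"
    by (auto split: if_splits)
  ultimately show ?thesis by simp
qed

lemma M_Int: "A \<in> TM_meas S \<Longrightarrow> B \<in> TM_meas S \<Longrightarrow> A \<inter> B \<in> TM_meas S"
proof -
  assume A: "A \<in> TM_meas S" and B: "B \<in> TM_meas S"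
  have "topspace S - ((topspace S - A) \<union> (topspace S - B)) \<in> TM_meas S"
    by (intro M_compl M_Un2 A B)
  moreover have "topspace S - ((topspace S - A) \<union> (topspace S - B)) = A \<inter> B"
    using M_sub[OF A] M_sub[OF B] by blast
  ultimately show ?thesis by simp
qed

lemma zero_piece:
  assumes "nowhere_dense_in S Z"
  shows "ems_sigma_finite {A\<in>TM_meas S. A \<subseteq> Z} {A\<in>TM_null S. A \<subseteq> Z}"
  unfolding ems_sigma_finite_def
proof (intro exI conjI)
  show "ems_finite_measure {A\<in>TM_meas S. A \<subseteq> Z} {A\<in>TM_null S. A \<subseteq> Z} (\<lambda>_. 0)"
    unfolding ems_finite_measure_def by simp
  show "ems_faithful {A\<in>TM_meas S. A \<subseteq> Z} {A\<in>TM_null S. A \<subseteq> Z} (\<lambda>_. 0)"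
    unfolding ems_faithful_def
  proof (intro ballI impI)
    fix m assume "m \<in> {A \<in> TM_meas S. A \<subseteq> Z}"
    then have "m \<subseteq> Z" by blast
    then have "nowhere_dense_in S m" by (rule nd_subset[OF assms])
    then show "m \<in> {A \<in> TM_null S. A \<subseteq> Z}" using N_iff \<open>m \<subseteq> Z\<close> by blast
  qed
qed

lemma strict_loc: "strictly_localizable (topspace S) (TM_meas S) (TM_null S)"
proof -
  obtain Fm where Fg: "Fm \<subseteq> Collect good" and Fd: "pairwise disjnt Fm"
    and dense: "S closure_of (\<Union>Fm) = topspace S"
    using maximal_family by blast
  have opF: "openin S Y" if "Y \<in> Fm" for Y using Fg that unfolding good_def by blast
  have opUF: "openin S (\<Union>Fm)" using opF by (intro openin_Union) auto
  have subT: "\<Union>Fm \<subseteq> topspace S" using opUF openin_subset by blast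
  have disj: "Y \<inter> Y' = {}" if "Y \<in> Fm" "Y' \<in> Fm" "Y \<noteq> Y'" for Y Y'
    using Fd that unfolding pairwise_def disjnt_def by blast
  define Z where "Z = topspace S - \<Union>Fm"
  have Zcl: "closedin S Z" unfolding Z_def using opUF by blast
  have ndZ: "nowhere_dense_in S Z"
    unfolding nd_iff
  proof (intro conjI allI impI)
    show "Z \<subseteq> topspace S" unfolding Z_def by blast
    fix T assume T: "openin S T \<and> T \<subseteq> S closure_of Z"
    then have "T \<subseteq> Z" using closure_of_closedin[OF Zcl] by simp
    then have "T \<inter> \<Union>Fm = {}" unfolding Z_def by blast
    then have "T \<inter> S closure_of (\<Union>Fm) = {}" using openin_Int_closure_of_eq_empty T by blast
    then show "T = {}" using dense T openin_subset by blast
  qed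
  have union_nd: "nowhere_dense_in S B"
    if B: "B \<subseteq> \<Union>Fm" and ndB: "\<And>Y. Y \<in> Fm \<Longrightarrow> nowhere_dense_in S (B \<inter> Y)" for B
    unfolding nd_iff
  proof (intro conjI allI impI)
    show "B \<subseteq> topspace S" using B subT by blast
    fix T assume T: "openin S T \<and> T \<subseteq> S closure_of B"
    show "T = {}"
    proof (rule ccontr)
      assume Tne: "T \<noteq> {}"
      have "T \<inter> S closure_of (\<Union>Fm) \<noteq> {}" using dense T Tne openin_subset by blast
      then have "T \<inter> \<Union>Fm \<noteq> {}" using openin_Int_closure_of_eq_empty T by blast
      then obtain Y where Y: "Y \<in> Fm" "T \<inter> Y \<noteq> {}" by blast
      have opTY: "openin S (T \<inter> Y)" using T opF[OF Y(1)] by blast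
      have "T \<inter> Y \<subseteq> S closure_of (B \<inter> Y)"
      proof
        fix x assume x: "x \<in> T \<inter> Y"
        show "x \<in> S closure_of (B \<inter> Y)"
          unfolding in_closure_of
        proof (intro conjI allI impI)
          show "x \<in> topspace S" using x opTY openin_subset by blast
          fix R assume R: "x \<in> R \<and> openin S R"
          then have op3: "openin S (R \<inter> (T \<inter> Y))" and x3: "x \<in> R \<inter> (T \<inter> Y)" using opTY x by auto
          have cB: "x \<in> S closure_of B" using x T by (meson IntD1 subsetD)
          have "\<exists>y. y \<in> B \<and> y \<in> R \<inter> (T \<inter> Y)"
            using mp[OF spec[OF conjunct2[OF cB[unfolded in_closure_of]], of "R \<inter> (T \<inter> Y)"] conjI[OF x3 op3]] .
          then obtain y where "y \<in> B" "y \<in> R \<inter> (T \<inter> Y)" by blast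
          then show "\<exists>y. y \<in> B \<inter> Y \<and> y \<in> R" by blast
        qed
      qed
      then have "T \<inter> Y = {}" using ndB[OF Y(1)] opTY unfolding nd_iff by blast
      then show False using Y(2) by blast
    qed
  qed
  define P where "P = insert Z Fm"
  show ?thesis
    unfolding strictly_localizable_def
  proof (intro exI[of _ P] conjI)
    show "P \<subseteq> TM_meas S" unfolding P_def using nd_M[OF ndZ] open_M opF by blast
    show "\<Union>P = topspace S" unfolding P_def Z_def using subT by blast
    show "\<forall>Y\<in>P. \<forall>Y'\<in>P. Y \<noteq> Y' \<longrightarrow> Y \<inter> Y' = {}"
      unfolding P_def Z_def using disj by blast
    show "\<forall>Y\<in>P. ems_sigma_finite {A\<in>TM_meas S. A \<subseteq> Y} {A\<in>TM_null S. A \<subseteq> Y}"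
    proof
      fix Y assume "Y \<in> P"
      then have "Y = Z \<or> Y \<in> Fm" unfolding P_def by blast
      then show "ems_sigma_finite {A\<in>TM_meas S. A \<subseteq> Y} {A\<in>TM_null S. A \<subseteq> Y}"
      proof
        assume "Y = Z" then show ?thesis using zero_piece[OF ndZ] by simp
      next
        assume Y: "Y \<in> Fm"
        then obtain \<nu> where "normal_open_measure S \<nu>" "\<forall>V. openin S V \<and> V \<subseteq> Y \<and> V \<noteq> {} \<longrightarrow> \<nu> V \<noteq> 0"
          using Fg unfolding good_def by blast
        then show ?thesis using sigma_finite_piece opF[OF Y] by blast
      qed
    qed
    have ZP: "Z \<in> P" and FP: "\<And>Y. Y \<in> Fm \<Longrightarrow> Y \<in> P" unfolding P_def by auto
    show "\<forall>A. A \<subseteq> topspace S \<longrightarrow> (A \<in> TM_meas S) = (\<forall>Y\<in>P. A \<inter> Y \<in> TM_meas S)"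
    proof (intro allI impI iffI ballI)
      fix A Y assume "A \<in> TM_meas S" "Y \<in> P"
      moreover have "Y \<in> TM_meas S" using \<open>Y \<in> P\<close> nd_M[OF ndZ] open_M opF unfolding P_def by blast
      ultimately show "A \<inter> Y \<in> TM_meas S" using M_Int by blast
    next
      fix A assume AX: "A \<subseteq> topspace S" and loc: "\<forall>Y\<in>P. A \<inter> Y \<in> TM_meas S"
      have "\<forall>Y\<in>Fm. \<exists>U. openin S U \<and> nowhere_dense_in S ((A \<inter> Y - U) \<union> (U - A \<inter> Y))"
        using loc FP unfolding M_iff by blast
      then obtain f where f: "\<And>Y. Y \<in> Fm \<Longrightarrow> openin S (f Y)"
        "\<And>Y. Y \<in> Fm \<Longrightarrow> nowhere_dense_in S ((A \<inter> Y - f Y) \<union> (f Y - A \<inter> Y))"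
        by metis
      define V where "V = (\<Union>Y\<in>Fm. f Y \<inter> Y)"
      have opV: "openin S V" unfolding V_def using f(1) opF by (intro openin_Union) auto
      define B where "B = (A - V) \<union> (V - A)"
      have VT: "V \<subseteq> topspace S" using opV openin_subset by blast
      have nd1: "nowhere_dense_in S (B \<inter> \<Union>Fm)"
      proof (rule union_nd)
        show "B \<inter> \<Union>Fm \<subseteq> \<Union>Fm" by blast
        fix Y assume Y: "Y \<in> Fm"
        have "B \<inter> \<Union>Fm \<inter> Y \<subseteq> (A \<inter> Y - f Y) \<union> (f Y - A \<inter> Y)"
        proof
          fix x assume x: "x \<in> B \<inter> \<Union>Fm \<inter> Y"
          show "x \<in> (A \<inter> Y - f Y) \<union> (f Y - A \<inter> Y)"
          proof (cases "x \<in> A")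
            case True
            then have "x \<notin> V" using x unfolding B_def by blast
            then have "x \<notin> f Y" using x Y unfolding V_def by blast
            then show ?thesis using True x by blast
          next
            case False
            then have "x \<in> V" using x unfolding B_def by blast
            then obtain Y' where Y': "Y' \<in> Fm" "x \<in> f Y'" "x \<in> Y'" unfolding V_def by blast
            then have "Y' = Y" using disj[OF Y' (1) Y] x by blast
            then show ?thesis using Y' False by blast
          qed
        qed
        then show "nowhere_dense_in S (B \<inter> \<Union>Fm \<inter> Y)" by (rule nd_subset[OF f(2)[OF Y]])
      qed
      have nd2: "nowhere_dense_in S (B \<inter> Z)" by (rule nd_subset[OF ndZ]) blast
      have "B \<subseteq> (B \<inter> \<Union>Fm) \<union> (B \<inter> Z)" unfolding Z_def B_def using AX VT by blast
      then have "nowhere_dense_in S B" by (rule nd_subset[OF nd_Un2[OF nd1 nd2]])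
      then show "A \<in> TM_meas S" unfolding M_iff B_def using opV by blast
    qed
    show "\<forall>A. A \<subseteq> topspace S \<longrightarrow> (A \<in> TM_null S) = (\<forall>Y\<in>P. A \<inter> Y \<in> TM_null S)"
    proof (intro allI impI iffI ballI)
      fix A Y assume "A \<in> TM_null S" "Y \<in> P"
      then have "nowhere_dense_in S A" using N_iff by blast
      then have "nowhere_dense_in S (A \<inter> Y)" by (rule nd_subset) blast
      then show "A \<inter> Y \<in> TM_null S" using N_iff by blast
    next
      fix A assume AX: "A \<subseteq> topspace S" and loc: "\<forall>Y\<in>P. A \<inter> Y \<in> TM_null S"
      have nd1: "nowhere_dense_in S (A \<inter> \<Union>Fm)"
      proof (rule union_nd)
        show "A \<inter> \<Union>Fm \<subseteq> \<Union>Fm" by blast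
        fix Y assume Y: "Y \<in> Fm"
        then have "nowhere_dense_in S (A \<inter> Y)" using loc FP N_iff by blast
        then show "nowhere_dense_in S (A \<inter> \<Union>Fm \<inter> Y)" by (rule nd_subset) blast
      qed
      have nd2: "nowhere_dense_in S (A \<inter> Z)" by (rule nd_subset[OF ndZ]) blast
      have "A \<subseteq> (A \<inter> \<Union>Fm) \<union> (A \<inter> Z)" unfolding Z_def using AX by blast
      then have "nowhere_dense_in S A" by (rule nd_subset[OF nd_Un2[OF nd1 nd2]])
      then show "A \<in> TM_null S" using N_iff by blast
    qed
  qed
qed

lemma cslems: "cslems (topspace S) (TM_meas S) (TM_null S)"
  unfolding cslems_def using ems compact_ems strict_loc by blast

end

lemma preimage_nd:
  assumes f: "continuous_map S S' f" "open_map S S' f" and B: "nowhere_dense_in S' B"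
  shows "nowhere_dense_in S {x \<in> topspace S. f x \<in> B}"
  unfolding nd_iff
proof (intro conjI allI impI)
  show "{x \<in> topspace S. f x \<in> B} \<subseteq> topspace S" by blast
  fix T assume T: "openin S T \<and> T \<subseteq> S closure_of {x \<in> topspace S. f x \<in> B}"
  have "closedin S {x \<in> topspace S. f x \<in> S' closure_of B}"
    using closedin_continuous_map_preimage[OF f(1)] by simp
  moreover have "{x \<in> topspace S. f x \<in> B} \<subseteq> {x \<in> topspace S. f x \<in> S' closure_of B}"
    using B closure_of_subset unfolding nowhere_dense_in_def by blast
  ultimately have "S closure_of {x \<in> topspace S. f x \<in> B} \<subseteq> {x \<in> topspace S. f x \<in> S' closure_of B}"
    by (rule closure_of_minimal[rotated])
  then have "f ` T \<subseteq> S' closure_of B" using T by blast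
  moreover have "openin S' (f ` T)" using f(2) T unfolding open_map_def by blast
  ultimately have "f ` T = {}" using B unfolding nd_iff by blast
  then show "T = {}" by blast
qed

lemma preimage_meager:
  assumes f: "continuous_map S S' f" "open_map S S' f" and A: "meager_in S' A"
  shows "meager_in S {x \<in> topspace S. f x \<in> A}"
proof -
  obtain F :: "nat \<Rightarrow> 'b set" where F: "\<forall>n. nowhere_dense_in S' (F n)" "A \<subseteq> (\<Union>n. F n)"
    using A unfolding meager_in_def by blast
  have h1: "\<forall>n. nowhere_dense_in S {x \<in> topspace S. f x \<in> F n}"
    using preimage_nd[OF f] F(1) by blast
  have h2: "{x \<in> topspace S. f x \<in> A} \<subseteq> (\<Union>n. {x \<in> topspace S. f x \<in> F n})"
    using F(2) by blast
  show ?thesis unfolding meager_in_def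
    apply (intro conjI exI[of _ "\<lambda>n::nat. {x \<in> topspace S. f x \<in> F n}"])
    using h1 h2 by auto
qed

lemma preimage_M:
  assumes f: "continuous_map S S' f" "open_map S S' f" and m: "m \<in> TM_meas S'"
  shows "{x \<in> topspace S. f x \<in> m} \<in> TM_meas S"
proof -
  obtain U A where m: "m = (U - A) \<union> (A - U)" and U: "openin S' U" and A: "meager_in S' A"
    using m unfolding TM_meas_def by blast
  let ?pU = "{x \<in> topspace S. f x \<in> U}" and ?pA = "{x \<in> topspace S. f x \<in> A}"
  have "openin S ?pU" using openin_continuous_map_preimage[OF f(1) U] .
  moreover have "meager_in S ?pA" using preimage_meager[OF f A] .
  moreover have "{x \<in> topspace S. f x \<in> m} = (?pU - ?pA) \<union> (?pA - ?pU)" unfolding m by blast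
  ultimately show ?thesis unfolding TM_meas_def by blast
qed

theorem mainTheorem7:
  shows "(\<forall>S :: 'a topology. hyperstonean S \<longrightarrow>
            cslems (topspace S) (TM_meas S) (TM_null S)) \<and>
         (\<forall>(S :: 'a topology) (S' :: 'b topology) f.
            hyperstonean S \<longrightarrow> hyperstonean S' \<longrightarrow>
            continuous_map S S' f \<longrightarrow> open_map S S' f \<longrightarrow>
            (\<forall>m\<in>TM_meas S'. {x \<in> topspace S. f x \<in> m} \<in> TM_meas S) \<and>
            (\<forall>n\<in>TM_null S'. {x \<in> topspace S. f x \<in> n} \<in> TM_null S))"
proof (intro conjI allI impI ballI)
  fix S :: "'a topology" assume "hyperstonean S"
  then interpret hs S by unfold_locales
  show "cslems (topspace S) (TM_meas S) (TM_null S)" by (rule cslems)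
next
  fix S :: "'a topology" and S' :: "'b topology" and f :: "'a \<Rightarrow> 'b" and m
  assume "continuous_map S S' f" "open_map S S' f" "m \<in> TM_meas S'"
  then show "{x \<in> topspace S. f x \<in> m} \<in> TM_meas S" by (rule preimage_M)
next
  fix S :: "'a topology" and S' :: "'b topology" and f :: "'a \<Rightarrow> 'b" and n
  assume "continuous_map S S' f" "open_map S S' f" "n \<in> TM_null S'"
  then show "{x \<in> topspace S. f x \<in> n} \<in> TM_null S"
    unfolding TM_null_def using preimage_meager by blast
qed


end
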